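(* Fix the graph Laplacian $L$ (notation in the context) and the diffusion coefficient $b\neq0$. Let $\tau_0>0$ and $\alpha_\tau\in[0,1)$ with $(1+\alpha_\tau)\tau_0<\pi/(2\lambda_n)$, and for $\lambda>0$ let $f_\lambda(\tau)=\frac{\cos(\lambda\tau)}{\lambda(1-\sin(\lambda\tau))}$. Define $$\varepsilon_\tau^{\pm}=\max_{k\in\{2,\dots,n\}}\frac{\big|f_{\lambda_k}((1\pm\alpha_\tau)\tau_0)-f_{\lambda_k}(\tau_0)\big|}{f_{\lambda_k}(\tau_0)}.$$ Then for every $\tau$ with $(1-\alpha_\tau)\tau_0\le\tau\le(1+\alpha_\tau)\tau_0$, the steady-state covariances satisfy $(1-\varepsilon_\tau^-)\Sigma(\tau_0)\preceq\Sigma(\tau)\preceq(1+\varepsilon_\tau^+)\Sigma(\tau_0)$; i.e., the steady-state distribution of the observables lies in $\mathcal M_\tau=\{\mathcal N(0,\Sigma):(1-\varepsilon_\tau^-)\Sigma_0\preceq\Sigma\preceq(1+\varepsilon_\tau^+)\Sigma_0\}$ with $\Sigma_0=\Sigma(\tau_0)$.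
   Context: Network: $\mathrm d x_t=-L\,x_{t-\tau}\,\mathrm dt+b\,\mathrm d w_t$, $w_t$ standard $n$-dimensional Brownian motion, $L$ the Laplacian of a connected undirected simple graph with positive edge weights, $L=Q\Lambda Q^\top$, $Q=[q_1|\dots|q_n]$ orthogonal, $q_1=\mathbf 1_n/\sqrt n$, $\Lambda=\mathrm{diag}(0,\lambda_2,\dots,\lambda_n)$, $0<\lambda_2\le\dots\le\lambda_n$. For a delay $\tau$ with $0\le\tau<\pi/(2\lambda_n)$, the observables $y=M_nx$, $M_n=I_n-\frac1n\mathbf 1_n\mathbf 1_n^\top$, have steady-state law $\mathcal N(0,\Sigma(\tau))$ with $\Sigma(\tau)=b^2M_nQ\Psi(\tau)Q^\top M_n$, $\Psi(\tau)=\mathrm{diag}\big(0,\tfrac12 f_{\lambda_2}(\tau),\dots,\tfrac12 f_{\lambda_n}(\tau)\big)$. $A\preceq B$ means $B-A$ is positive semidefinite. *)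

theory Defs
  imports "HOL-Analysis.Analysis"
begin

text \<open>Weighted undirected simple graph on the finite vertex type 'n, given by a
  weight function w: w i j > 0 iff {i,j} is an edge (with weight w i j).\<close>
definition weighted_simple_graph :: "('n::finite \<Rightarrow> 'n \<Rightarrow> real) \<Rightarrow> bool" where
  "weighted_simple_graph w \<longleftrightarrow>
     (\<forall>i j. w i j = w j i) \<and> (\<forall>i. w i i = 0) \<and> (\<forall>i j. 0 \<le> w i j)"

definition graph_connected :: "('n::finite \<Rightarrow> 'n \<Rightarrow> real) \<Rightarrow> bool" where
  "graph_connected w \<longleftrightarrow> (\<forall>i j. (i, j) \<in> {(a, b). 0 < w a b}\<^sup>*)"

definition laplacian :: "('n::finite \<Rightarrow> 'n \<Rightarrow> real) \<Rightarrow> real^'n^'n" where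
  "laplacian w = (\<chi> i j. if i = j then (\<Sum>k\<in>UNIV. w i k) else - w i j)"

definition diag_mat :: "('n::finite \<Rightarrow> real) \<Rightarrow> real^'n^'n" where
  "diag_mat d = (\<chi> i j. if i = j then d i else 0)"

definition centering :: "real^'n::finite^'n" where
  "centering = (\<chi> i j. (if i = j then 1 else 0) - 1 / real CARD('n))"

definition f_delay :: "real \<Rightarrow> real \<Rightarrow> real" where
  "f_delay lam t = cos (lam * t) / (lam * (1 - sin (lam * t)))"

text \<open>Steady-state covariance Sigma(tau) = b^2 M Q Psi(tau) Q^T M, where i0 is the
  index of the eigenvector 1/sqrt n (eigenvalue 0).\<close>
definition Sigma :: "real \<Rightarrow> real^'n::finite^'n \<Rightarrow> ('n \<Rightarrow> real) \<Rightarrow> 'n \<Rightarrow> real \<Rightarrow> real^'n^'n" where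
  "Sigma b Q lam i0 t =
     (b^2) *\<^sub>R (centering ** Q **
        diag_mat (\<lambda>k. if k = i0 then 0 else f_delay (lam k) t / 2) ** transpose Q ** centering)"

definition psd :: "real^'n::finite^'n \<Rightarrow> bool" where
  "psd A \<longleftrightarrow> transpose A = A \<and> (\<forall>x. 0 \<le> x \<bullet> (A *v x))"

definition loewner_le :: "real^'n::finite^'n \<Rightarrow> real^'n^'n \<Rightarrow> bool" where
  "loewner_le A B \<longleftrightarrow> psd (B - A)"

end

theory Submission
  imports Defs
begin

lemma vm_tr: "(x::real^'n::finite) v* A = transpose A *v x"
  by (simp add: vector_matrix_mult_def matrix_vector_mult_def transpose_def vec_eq_iff mult.commute)
lemma diag_quad: "(y::real^'n::finite) \<bullet> (diag_mat d *v y) = (\<Sum>k\<in>UNIV. d k * (y$k)^2)"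
proof -
  have ifm: "\<And>P a b. (if P then a else 0) * b = (if P then a * b else (0::real))" by simp
  have "diag_mat d *v y = (\<chi> i. d i * y$i)"
    by (simp add: vec_eq_iff diag_mat_def matrix_vector_mult_def ifm)
  thus ?thesis by (simp add: inner_vec_def power2_eq_square algebra_simps)
qed
lemma transpose_diff: "transpose (A - B) = transpose A - (transpose B :: real^'n::finite^'m::finite)"
  by (simp add: transpose_def vec_eq_iff)
lemma centering_sym: "transpose (centering::real^'n::finite^'n) = centering"
  by (simp add: transpose_def centering_def vec_eq_iff)
lemma diag_sym: "transpose (diag_mat d) = diag_mat d"
  by (simp add: transpose_def diag_mat_def vec_eq_iff)
lemma quad: "(x::real^'n::finite) \<bullet> ((centering ** Q ** diag_mat d ** transpose Q ** centering) *v x)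
   = (\<Sum>k\<in>UNIV. d k * ((transpose Q *v (centering *v x))$k)^2)"
proof -
  have "(centering ** Q ** diag_mat d ** transpose Q ** centering) *v x
     = centering *v (Q *v (diag_mat d *v (transpose Q *v (centering *v x))))"
    by (simp add: matrix_vector_mul_assoc matrix_mul_assoc)
  hence "x \<bullet> ((centering ** Q ** diag_mat d ** transpose Q ** centering) *v x)
     = ((x v* centering) v* Q) \<bullet> (diag_mat d *v (transpose Q *v (centering *v x)))"
    by (simp add: dot_lmul_matrix)
  also have "(x v* centering) v* Q = transpose Q *v (centering *v x)"
    by (simp only: vm_tr centering_sym)
  finally show ?thesis by (simp add: diag_quad)
qed
lemma sym: "transpose (centering ** Q ** diag_mat d ** transpose Q ** centering) = (centering ** Q ** diag_mat d ** transpose Q ** centering :: real^'n::finite^'n)"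
  by (simp add: matrix_transpose_mul centering_sym diag_sym matrix_mul_assoc)
lemma psd_diff:
  fixes Q :: "real^'n::finite^'n"
  assumes "\<forall>k. s * d2 k \<le> r * d1 k"
  shows "psd (r *\<^sub>R (b^2) *\<^sub>R (centering ** Q ** diag_mat d1 ** transpose Q ** centering)
           - s *\<^sub>R ((b^2) *\<^sub>R (centering ** Q ** diag_mat d2 ** transpose Q ** centering)))"
  unfolding psd_def
proof (intro conjI allI)
  show "transpose (r *\<^sub>R (b^2) *\<^sub>R (centering ** Q ** diag_mat d1 ** transpose Q ** centering)
           - s *\<^sub>R ((b^2) *\<^sub>R (centering ** Q ** diag_mat d2 ** transpose Q ** centering))) = 
        (r *\<^sub>R (b^2) *\<^sub>R (centering ** Q ** diag_mat d1 ** transpose Q ** centering)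
           - s *\<^sub>R ((b^2) *\<^sub>R (centering ** Q ** diag_mat d2 ** transpose Q ** centering)))"
    by (simp add: transpose_diff transpose_scalar sym)
  fix x :: "real^'n"
  define y where "y = transpose Q *v (centering *v x)"
  have "x \<bullet> ((r *\<^sub>R (b^2) *\<^sub>R (centering ** Q ** diag_mat d1 ** transpose Q ** centering)
           - s *\<^sub>R ((b^2) *\<^sub>R (centering ** Q ** diag_mat d2 ** transpose Q ** centering))) *v x)
     = r * b^2 * (\<Sum>k\<in>UNIV. d1 k * (y$k)^2) - s * b^2 * (\<Sum>k\<in>UNIV. d2 k * (y$k)^2)"
    by (simp add: matrix_vector_mult_diff_rdistrib inner_diff_right
          flip: scaleR_matrix_vector_assoc add: quad y_def)
  also have "\<dots> = b^2 * (\<Sum>k\<in>UNIV. (r * d1 k - s * d2 k) * (y$k)^2)"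
    by (simp add: sum_distrib_left algebra_simps sum_subtractf)
  also have "\<dots> \<ge> 0" using assms by (intro mult_nonneg_nonneg sum_nonneg) auto
  finally show "0 \<le> x \<bullet> ((r *\<^sub>R (b^2) *\<^sub>R (centering ** Q ** diag_mat d1 ** transpose Q ** centering)
           - s *\<^sub>R ((b^2) *\<^sub>R (centering ** Q ** diag_mat d2 ** transpose Q ** centering))) *v x)" .
qed
lemma f_alt: assumes "0 \<le> u" "u < pi/2" shows "cos u / (1 - sin u) = (1 + sin u) / cos u"
proof -
  have c: "cos u > 0" using assms by (intro cos_gt_zero_pi) auto
  have s: "sin u < 1" using assms sin_monotone_2pi[of u "pi/2"] by auto
  show ?thesis using c s by (simp add: field_simps flip: power2_eq_square)
qed
lemma f_mono: assumes "0 < l" "0 \<le> t" "t \<le> t'" "l * t' < pi/2"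
  shows "f_delay l t \<le> f_delay l t'" "0 < f_delay l t"
proof -
  have u: "0 \<le> l*t" "l*t \<le> l*t'" using assms by (auto intro: mult_left_mono)
  have c: "cos (l*t') > 0" using assms u pi_gt_zero by (intro cos_gt_zero_pi; linarith)
  have cc: "cos (l*t') \<le> cos (l*t)" using u assms pi_gt_zero by (intro cos_monotone_0_pi_le; linarith)
  have ss: "sin (l*t) \<le> sin (l*t')" using u assms pi_gt_zero by (intro sin_monotone_2pi_le; linarith)
  have s0: "0 \<le> sin (l*t)" using u assms pi_gt_zero by (intro sin_ge_zero; linarith)
  have e: "f_delay l x = ((1 + sin (l*x)) / cos (l*x)) / l" if "0 \<le> l*x" "l*x < pi/2" for x
    using f_alt[OF that] unfolding f_delay_def by (metis divide_divide_eq_left mult.commute)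
  have u2: "l*t < pi/2" using u assms by linarith
  have "(1 + sin (l*t)) / cos (l*t) \<le> (1 + sin (l*t')) / cos (l*t')"
    using c cc ss s0 by (intro frac_le) auto
  hence "((1 + sin (l*t)) / cos (l*t)) / l \<le> ((1 + sin (l*t')) / cos (l*t')) / l"
    using assms by (intro divide_right_mono) auto
  thus "f_delay l t \<le> f_delay l t'" using e[of t] e[of t'] u u2 assms by simp
  have "0 < (1 + sin (l*t)) / cos (l*t)" using c cc s0 by auto
  hence "0 < ((1 + sin (l*t)) / cos (l*t)) / l" using assms by (intro divide_pos_pos[of _ l]) auto
  thus "0 < f_delay l t" using e[of t] u u2 assms by simp
qed

theorem proposition2:
  fixes w :: "'n::finite \<Rightarrow> 'n \<Rightarrow> real"
    and Q :: "real^'n^'n" and lam :: "'n \<Rightarrow> real" and i0 :: 'n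
    and b tau0 alpha :: real
  assumes n2: "CARD('n) \<ge> 2"
    and graph: "weighted_simple_graph w" and conn: "graph_connected w"
    and orth: "orthogonal_matrix Q"
    and eig: "laplacian w = Q ** diag_mat lam ** transpose Q"
    and q1: "\<forall>j. Q $ j $ i0 = 1 / sqrt (real CARD('n))"
    and lam0: "lam i0 = 0"
    and lampos: "\<forall>k. k \<noteq> i0 \<longrightarrow> 0 < lam k"
    and b: "b \<noteq> 0"
    and tau0: "0 < tau0"
    and alpha: "0 \<le> alpha" "alpha < 1"
    and small: "(1 + alpha) * tau0 < pi / (2 * Max (range lam))"
  shows "\<forall>tau. (1 - alpha) * tau0 \<le> tau \<and> tau \<le> (1 + alpha) * tau0 \<longrightarrow>
    (let epsp = Max ((\<lambda>k. \<bar>f_delay (lam k) ((1 + alpha) * tau0) - f_delay (lam k) tau0\<bar>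
                          / f_delay (lam k) tau0) ` (UNIV - {i0}));
         epsm = Max ((\<lambda>k. \<bar>f_delay (lam k) ((1 - alpha) * tau0) - f_delay (lam k) tau0\<bar>
                          / f_delay (lam k) tau0) ` (UNIV - {i0}))
     in loewner_le ((1 - epsm) *\<^sub>R Sigma b Q lam i0 tau0) (Sigma b Q lam i0 tau)
      \<and> loewner_le (Sigma b Q lam i0 tau) ((1 + epsp) *\<^sub>R Sigma b Q lam i0 tau0))"
proof (intro allI impI)
  fix tau assume tau: "(1 - alpha) * tau0 \<le> tau \<and> tau \<le> (1 + alpha) * tau0"
  define M where "M = Max (range lam)"
  define tp where "tp = (1 + alpha) * tau0"
  define tm where "tm = (1 - alpha) * tau0"
  define F where "F k t = f_delay (lam k) t" for k t
  define epsp where "epsp = Max ((\<lambda>k. \<bar>f_delay (lam k) ((1 + alpha) * tau0) - f_delay (lam k) tau0\<bar>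
                          / f_delay (lam k) tau0) ` (UNIV - {i0}))"
  define epsm where "epsm = Max ((\<lambda>k. \<bar>f_delay (lam k) ((1 - alpha) * tau0) - f_delay (lam k) tau0\<bar>
                          / f_delay (lam k) tau0) ` (UNIV - {i0}))"
  have tms: "0 \<le> tm" "tm \<le> tau" "tau \<le> tp" "tm \<le> tau0" "tau0 \<le> tp"
    using tau tau0 alpha unfolding tm_def tp_def by auto
  have key: "(1 - epsm) * F k tau0 \<le> F k tau \<and> F k tau \<le> (1 + epsp) * F k tau0" if k: "k \<noteq> i0" for k
  proof -
    have lk: "0 < lam k" using lampos k by auto
    have lM: "lam k \<le> M" unfolding M_def by (intro Max_ge) auto
    have Mp: "0 < M" using lk lM by linarith
    have "M * tp < pi / 2" using small Mp unfolding tp_def M_def[symmetric]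
      by (simp add: field_simps)
    moreover have "lam k * tp \<le> M * tp" using lM tms tau0 by (intro mult_right_mono) auto
    ultimately have lt: "lam k * tp < pi / 2" by linarith
    have ltau: "lam k * tau < pi/2" "lam k * tau0 < pi/2"
    proof -
      have "lam k * tau \<le> lam k * tp" "lam k * tau0 \<le> lam k * tp"
        using lk tms by (auto intro: mult_left_mono)
      thus "lam k * tau < pi/2" "lam k * tau0 < pi/2" using lt by linarith+
    qed
    have m1: "F k tm \<le> F k tau" "F k tau \<le> F k tp" "F k tm \<le> F k tau0" "F k tau0 \<le> F k tp"
      unfolding F_def using f_mono(1) lk tms lt ltau by (meson order_trans)+
    have pos: "0 < F k tau0" unfolding F_def using f_mono(2)[OF lk _ order_refl ltau(2)] tau0 by auto
    have em: "\<bar>F k tm - F k tau0\<bar> / F k tau0 \<le> epsm"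
      unfolding epsm_def F_def tm_def using k by (intro Max_ge) auto
    have ep: "\<bar>F k tp - F k tau0\<bar> / F k tau0 \<le> epsp"
      unfolding epsp_def F_def tp_def using k by (intro Max_ge) auto
    have "(F k tau0 - F k tm) \<le> epsm * F k tau0" using em m1 pos by (simp add: field_simps)
    moreover have "(F k tp - F k tau0) \<le> epsp * F k tau0" using ep m1 pos by (simp add: field_simps)
    ultimately show ?thesis using m1 by (simp add: algebra_simps)
  qed
  have S: "Sigma b Q lam i0 t = (b^2) *\<^sub>R (centering ** Q ** diag_mat (\<lambda>k. if k = i0 then 0 else F k t / 2) ** transpose Q ** centering)" for t
    unfolding Sigma_def F_def by simp
  have L: "loewner_le ((1 - epsm) *\<^sub>R Sigma b Q lam i0 tau0) (Sigma b Q lam i0 tau)"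
  proof -
    have "\<forall>k. (1 - epsm) * (if k = i0 then 0 else F k tau0 / 2) \<le> 1 * (if k = i0 then 0 else F k tau / 2)"
      using key by auto
    from psd_diff[OF this, of b Q] show ?thesis unfolding loewner_le_def S by simp
  qed
  have U: "loewner_le (Sigma b Q lam i0 tau) ((1 + epsp) *\<^sub>R Sigma b Q lam i0 tau0)"
  proof -
    have "\<forall>k. 1 * (if k = i0 then 0 else F k tau / 2) \<le> (1 + epsp) * (if k = i0 then 0 else F k tau0 / 2)"
      using key by auto
    from psd_diff[OF this, of b Q] show ?thesis unfolding loewner_le_def S by simp
  qed
  show "let epsp = Max ((\<lambda>k. \<bar>f_delay (lam k) ((1 + alpha) * tau0) - f_delay (lam k) tau0\<bar>
                          / f_delay (lam k) tau0) ` (UNIV - {i0}));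
         epsm = Max ((\<lambda>k. \<bar>f_delay (lam k) ((1 - alpha) * tau0) - f_delay (lam k) tau0\<bar>
                          / f_delay (lam k) tau0) ` (UNIV - {i0}))
     in loewner_le ((1 - epsm) *\<^sub>R Sigma b Q lam i0 tau0) (Sigma b Q lam i0 tau)
      \<and> loewner_le (Sigma b Q lam i0 tau) ((1 + epsp) *\<^sub>R Sigma b Q lam i0 tau0)"
    using L U unfolding epsp_def epsm_def Let_def by simp
qed

end
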